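(* Let $F$ be a global function field with full constant field $\mathbb{F}_q$ and rational places $P_1,\dots,P_n$; fix $m\ge1$. Let $r\ge t\ge0$ and $j_1,\dots,j_m\ge0$ be integers. The set $\mathcal{U}(r,t;j_1,\dots,j_m)$ is nonempty if and only if (i) $mn-(j_1+2j_2+\cdots+mj_m)\le t\le(m+1)n-(2j_1+3j_2+\cdots+(m+1)j_m)$, and (ii) if $mn=t+j_1+2j_2+\cdots+mj_m$ and $r>t$, then there exists a positive divisor of degree $r-t$ whose support is disjoint from $\{P_1,\dots,P_n\}$.
   Context: For a positive divisor $D$: $\overline D=\sum_{i=1}^n\min(m+1,v_{P_i}(D))P_i$, $j_\ell(D)=|\{i:v_{P_i}(D)=m-\ell\}|$. $\mathcal{U}(r,t;j_1,\dots,j_m)$ is the set of positive divisors $D$ of $F$ with $\deg D=r$, $\deg\overline D=t$ and $j_\ell(D)=j_\ell$ for $1\le\ell\le m$. *)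

theory Defs
  imports Main
begin

(* Places of the function field are modelled by a type 'p together with a
   degree function pdeg :: 'p => nat (deg P >= 1).  A positive (effective)
   divisor is a finitely supported function 'p => nat (its valuations). *)

definition supp :: "('p \<Rightarrow> nat) \<Rightarrow> 'p set" where
  "supp D = {Q. D Q \<noteq> 0}"

definition pos_divisor :: "('p \<Rightarrow> nat) \<Rightarrow> bool" where
  "pos_divisor D \<longleftrightarrow> finite (supp D)"

definition div_deg :: "('p \<Rightarrow> nat) \<Rightarrow> ('p \<Rightarrow> nat) \<Rightarrow> nat" where
  "div_deg pdeg D = (\<Sum>Q\<in>supp D. D Q * pdeg Q)"

definition Dbar :: "nat \<Rightarrow> nat \<Rightarrow> (nat \<Rightarrow> 'p) \<Rightarrow> ('p \<Rightarrow> nat) \<Rightarrow> ('p \<Rightarrow> nat)" where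
  "Dbar m n P D = (\<lambda>Q. if Q \<in> P ` {1..n} then min (m + 1) (D Q) else 0)"

definition jl :: "nat \<Rightarrow> nat \<Rightarrow> (nat \<Rightarrow> 'p) \<Rightarrow> ('p \<Rightarrow> nat) \<Rightarrow> nat \<Rightarrow> nat" where
  "jl m n P D l = card {i \<in> {1..n}. D (P i) = m - l}"

definition U :: "('p \<Rightarrow> nat) \<Rightarrow> nat \<Rightarrow> nat \<Rightarrow> (nat \<Rightarrow> 'p) \<Rightarrow> nat \<Rightarrow> nat \<Rightarrow> (nat \<Rightarrow> nat)
    \<Rightarrow> ('p \<Rightarrow> nat) set" where
  "U pdeg m n P r t j = {D. pos_divisor D \<and> div_deg pdeg D = r \<and>
       div_deg pdeg (Dbar m n P D) = t \<and> (\<forall>l\<in>{1..m}. jl m n P D l = j l)}"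

end

theory Submission
  imports Defs
begin


lemma div_deg_superset:
  assumes "finite S" "supp D \<subseteq> S"
  shows "div_deg pdeg D = (\<Sum>Q\<in>S. D Q * pdeg Q)"
  unfolding div_deg_def using assms by (intro sum.mono_neutral_left) (auto simp: supp_def)

lemma deg_decomp:
  fixes P :: "nat \<Rightarrow> 'p"
  assumes pos: "pos_divisor D" and inj: "inj_on P {1..n}"
    and rat: "\<And>i. i\<in>{1..n} \<Longrightarrow> pdeg (P i) = 1"
  shows "div_deg pdeg D = (\<Sum>i\<in>{1..n}. D (P i)) + div_deg pdeg (\<lambda>Q. if Q \<in> P`{1..n} then 0 else D Q)"
proof -
  let ?B = "P`{1..n}" let ?S = "supp D \<union> ?B"
  have fS: "finite ?S" using pos unfolding pos_divisor_def by blast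
  have "div_deg pdeg D = (\<Sum>Q\<in>?S. D Q * pdeg Q)" by (rule div_deg_superset[OF fS]) auto
  also have "\<dots> = (\<Sum>Q\<in>?S - ?B. D Q * pdeg Q) + (\<Sum>Q\<in>?B. D Q * pdeg Q)"
    using fS by (intro sum.subset_diff) auto
  also have "(\<Sum>Q\<in>?B. D Q * pdeg Q) = (\<Sum>i\<in>{1..n}. D (P i))" using inj rat by (simp add: sum.reindex)
  also have "(\<Sum>Q\<in>?S - ?B. D Q * pdeg Q) = div_deg pdeg (\<lambda>Q. if Q \<in> ?B then 0 else D Q)"
  proof -
    have "div_deg pdeg (\<lambda>Q. if Q \<in> ?B then 0 else D Q) = (\<Sum>Q\<in>?S - ?B. (if Q \<in> ?B then 0 else D Q) * pdeg Q)"
      using fS by (intro div_deg_superset) (auto simp: supp_def)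
    also have "\<dots> = (\<Sum>Q\<in>?S - ?B. D Q * pdeg Q)" by (intro sum.cong) auto
    finally show ?thesis by simp
  qed
  finally show ?thesis by simp
qed

lemma deg_Dbar:
  assumes inj: "inj_on P {1..n}" and rat: "\<And>i. i\<in>{1..n} \<Longrightarrow> pdeg (P i) = 1"
  shows "div_deg pdeg (Dbar m n P D) = (\<Sum>i\<in>{1..n}. min (m+1) (D (P i)))"
proof -
  have "div_deg pdeg (Dbar m n P D) = (\<Sum>Q\<in>P`{1..n}. Dbar m n P D Q * pdeg Q)"
    by (intro div_deg_superset) (auto simp: supp_def Dbar_def)
  also have "\<dots> = (\<Sum>i\<in>{1..n}. min (m+1) (D (P i)))" using inj rat
    by (simp add: sum.reindex Dbar_def)
  finally show ?thesis .
qed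

lemma count_sum:
  fixes h :: "nat \<Rightarrow> int"
  assumes "finite A"
  shows "(\<Sum>l=1..m. h l * int (card {i\<in>A. v i = m - l})) = (\<Sum>i\<in>A. if v i < m then h (m - v i) else 0)"
proof -
  have "(\<Sum>l=1..m. h l * int (card {i\<in>A. v i = m - l})) = (\<Sum>l=1..m. \<Sum>i\<in>A. if v i = m - l then h l else 0)"
    using assms by (intro sum.cong refl) (simp add: sum.If_cases Int_def conj_commute)
  also have "\<dots> = (\<Sum>i\<in>A. \<Sum>l=1..m. if v i = m - l then h l else 0)" by (rule sum.swap)
  also have "\<dots> = (\<Sum>i\<in>A. if v i < m then h (m - v i) else 0)"
  proof (intro sum.cong refl)
    fix i assume "i \<in> A"
    show "(\<Sum>l=1..m. if v i = m - l then h l else 0) = (if v i < m then h (m - v i) else 0)"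
    proof (cases "v i < m")
      case True
      have "(\<Sum>l=1..m. if v i = m - l then h l else 0) = (\<Sum>l=1..m. if m - v i = l then h l else 0)"
        using True by (intro sum.cong refl) auto
      also have "\<dots> = h (m - v i)" using True by (subst sum.delta') auto
      finally show ?thesis using True by simp
    next
      case False
      then show ?thesis by (intro trans[OF sum.neutral]) auto
    qed
  qed
  finally show ?thesis .
qed

lemma shift_card:
  assumes "length L = n"
  shows "card {i\<in>{1..n}. Q (L!(i-1))} = length (filter Q L)"
proof -
  have "{i\<in>{1..n}. Q (L!(i-1))} = Suc ` {i. i < length L \<and> Q (L!i)}"
  proof
    show "{i\<in>{1..n}. Q (L!(i-1))} \<subseteq> Suc ` {i. i < length L \<and> Q (L!i)}"
    proof
      fix i assume i: "i \<in> {i\<in>{1..n}. Q (L!(i-1))}"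
      then have "i = Suc (i - 1)" "i - 1 < length L" "Q (L!(i-1))" using assms by auto
      then show "i \<in> Suc ` {i. i < length L \<and> Q (L!i)}" by blast
    qed
    show "Suc ` {i. i < length L \<and> Q (L!i)} \<subseteq> {i\<in>{1..n}. Q (L!(i-1))}" using assms by auto
  qed
  then show ?thesis by (simp add: length_filter_conv_card card_image)
qed

lemma shift_sum:
  assumes "length L = n"
  shows "(\<Sum>i\<in>{1..n}. f (L!(i-1))) = sum_list (map f L)"
proof -
  have "(\<Sum>i\<in>{1..n}. f (L!(i-1))) = (\<Sum>i\<in>Suc ` {..<n}. f (L!(i-1)))" by (simp add: image_Suc_lessThan)
  also have "\<dots> = (\<Sum>i<n. f (L!i))" by (simp add: sum.reindex)
  also have "\<dots> = sum_list (map f L)" using assms by (simp add: sum_list_sum_nth lessThan_atLeast0)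
  finally show ?thesis .
qed



lemma list_constr:
  fixes j :: "nat \<Rightarrow> nat" and m s K e :: nat
  defines "A \<equiv> concat (map (\<lambda>l. replicate (j l) (m - l)) [1..<Suc m])"
  defines "L \<equiv> A @ replicate s m @ (if K = 0 then [] else replicate (K-1) (m+1) @ [m+1+e])"
  shows "length L = (\<Sum>l=1..m. j l) + s + K"
    and "l \<in> {1..m} \<Longrightarrow> length (filter (\<lambda>x. x = m - l) L) = j l"
    and "length (filter (\<lambda>x. m < x) L) = K"
    and "sum_list (map (\<lambda>x. x - min (m+1) x) L) = (if K = 0 then 0 else e)"
proof -
  have Aset: "\<forall>x\<in>set A. x < m" unfolding A_def by auto
  have lenA: "length A = (\<Sum>l=1..m. j l)"
  proof -
    have "length A = (\<Sum>l\<leftarrow>[1..<Suc m]. j l)" unfolding A_def by (simp add: length_concat comp_def)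
    also have "\<dots> = (\<Sum>l=1..m. j l)"
      by (simp only: flip: sum_set_upt_conv_sum_list_nat) (simp only: set_upt atLeastLessThanSuc_atLeastAtMost)
    finally show ?thesis .
  qed
  show "length L = (\<Sum>l=1..m. j l) + s + K" unfolding L_def using lenA by auto
  show "length (filter (\<lambda>x. m < x) L) = K"
  proof -
    have "filter (\<lambda>x. m < x) A = []" using Aset by (force simp add: filter_empty_conv)
    then show ?thesis unfolding L_def by (auto simp: filter_replicate)
  qed
  show "sum_list (map (\<lambda>x. x - min (m+1) x) L) = (if K = 0 then 0 else e)"
  proof -
    have "sum_list (map (\<lambda>x. x - min (m+1) x) A) = 0" using Aset
      by (force simp add: sum_list_eq_0_iff)
    then show ?thesis unfolding L_def by (auto simp: sum_list_replicate)
  qed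
  assume l: "l \<in> {1..m}"
  have "length (filter (\<lambda>x. x = m - l) A) = (\<Sum>l'\<leftarrow>[1..<Suc m]. length (filter (\<lambda>x. x = m - l) (replicate (j l') (m - l'))))"
    unfolding A_def by (simp add: filter_concat length_concat comp_def del: upt_Suc)
  also have "\<dots> = (\<Sum>l'\<leftarrow>[1..<Suc m]. if m - l' = m - l then j l' else 0)"
    by (intro arg_cong[where f=sum_list] map_cong refl) (simp add: filter_replicate)
  also have "\<dots> = (\<Sum>l'=1..m. if m - l' = m - l then j l' else 0)"
    by (simp only: flip: sum_set_upt_conv_sum_list_nat) (simp only: set_upt atLeastLessThanSuc_atLeastAtMost)
  also have "\<dots> = (\<Sum>l'=1..m. if l = l' then j l' else 0)"
    using l by (intro sum.cong refl) auto
  also have "\<dots> = j l" using l by (simp add: sum.delta)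
  finally show "length (filter (\<lambda>x. x = m - l) L) = j l"
    unfolding L_def using l by (auto simp: filter_replicate)
qed



lemma lowsum:
  assumes "\<And>l. l\<in>{1..m} \<Longrightarrow> j l = card {i\<in>{1..n}. v i = m - l}"
  shows "int m * int n - (\<Sum>l=1..m. int l * int (j l)) = (\<Sum>i\<in>{1..n}. int (min m (v i)))"
proof -
  have "(\<Sum>l=1..m. int l * int (j l)) = (\<Sum>l=1..m. int l * int (card {i\<in>{1..n}. v i = m - l}))"
    using assms by (intro sum.cong) auto
  also have "\<dots> = (\<Sum>i\<in>{1..n}. if v i < m then int (m - v i) else 0)"
    by (rule count_sum) simp
  finally have s: "(\<Sum>l=1..m. int l * int (j l)) = (\<Sum>i\<in>{1..n}. if v i < m then int (m - v i) else 0)" .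
  have "int m * int n = (\<Sum>i\<in>{1..n}. int m)" by simp
  then have "int m * int n - (\<Sum>l=1..m. int l * int (j l)) = (\<Sum>i\<in>{1..n}. int m - (if v i < m then int (m - v i) else 0))"
    unfolding s by (simp add: sum_subtractf)
  also have "\<dots> = (\<Sum>i\<in>{1..n}. int (min m (v i)))" by (intro sum.cong refl) (simp add: of_nat_diff min_def)
  finally show ?thesis .
qed

lemma upsum:
  assumes "\<And>l. l\<in>{1..m} \<Longrightarrow> j l = card {i\<in>{1..n}. v i = m - l}"
  shows "(int m + 1) * int n - (\<Sum>l=1..m. (int l + 1) * int (j l)) = (\<Sum>i\<in>{1..n}. if v i < m then int (v i) else int m + 1)"
proof -
  have "(\<Sum>l=1..m. (int l + 1) * int (j l)) = (\<Sum>l=1..m. (int l + 1) * int (card {i\<in>{1..n}. v i = m - l}))"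
    using assms by (intro sum.cong) auto
  also have "\<dots> = (\<Sum>i\<in>{1..n}. if v i < m then int (m - v i) + 1 else 0)"
    by (rule count_sum[where h = "\<lambda>l. int l + 1"]) simp
  finally have s: "(\<Sum>l=1..m. (int l + 1) * int (j l)) = (\<Sum>i\<in>{1..n}. if v i < m then int (m - v i) + 1 else 0)" .
  have "(int m + 1) * int n = (\<Sum>i\<in>{1..n}. int m + 1)" by simp
  then have "(int m + 1) * int n - (\<Sum>l=1..m. (int l + 1) * int (j l)) = (\<Sum>i\<in>{1..n}. (int m + 1) - (if v i < m then int (m - v i) + 1 else 0))"
    unfolding s by (simp add: sum_subtractf)
  also have "\<dots> = (\<Sum>i\<in>{1..n}. if v i < m then int (v i) else int m + 1)" by (intro sum.cong refl) (simp add: of_nat_diff)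
  finally show ?thesis .
qed

theorem lemma3p3:
  fixes pdeg :: "'p \<Rightarrow> nat" and P :: "nat \<Rightarrow> 'p"
    and m n r t :: nat and j :: "nat \<Rightarrow> nat"
  assumes pdeg_pos: "\<And>Q. pdeg Q \<ge> 1"
    and P_inj: "inj_on P {1..n}"
    and P_rat: "\<And>i. i \<in> {1..n} \<Longrightarrow> pdeg (P i) = 1"
    and m_pos: "m \<ge> 1"
    and rt: "t \<le> r"
  shows "U pdeg m n P r t j \<noteq> {} \<longleftrightarrow>
    ((int m * int n - (\<Sum>l=1..m. int l * int (j l)) \<le> int t \<and>
      int t \<le> (int m + 1) * int n - (\<Sum>l=1..m. (int l + 1) * int (j l))) \<and>
     ((int m * int n = int t + (\<Sum>l=1..m. int l * int (j l)) \<and> r > t) \<longrightarrow>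
        (\<exists>D. pos_divisor D \<and> div_deg pdeg D = r - t \<and>
             supp D \<inter> P ` {1..n} = {})))"
proof
  assume "U pdeg m n P r t j \<noteq> {}"
  then obtain D where D: "D \<in> U pdeg m n P r t j" by blast
  define v where "v i = D (P i)" for i
  have posD: "pos_divisor D" and degD: "div_deg pdeg D = r"
    and dbar: "div_deg pdeg (Dbar m n P D) = t" and jD: "\<forall>l\<in>{1..m}. jl m n P D l = j l"
    using D by (auto simp: U_def)
  have jv: "\<And>l. l\<in>{1..m} \<Longrightarrow> j l = card {i\<in>{1..n}. v i = m - l}"
    using jD by (auto simp: jl_def v_def)
  have tv: "t = (\<Sum>i\<in>{1..n}. min (m+1) (v i))"
    using dbar deg_Dbar[where P=P and n=n and pdeg=pdeg, OF P_inj P_rat] by (simp add: v_def)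
  define E where "E = (\<lambda>Q. if Q \<in> P`{1..n} then 0 else D Q)"
  have rv: "r = (\<Sum>i\<in>{1..n}. v i) + div_deg pdeg E"
    using deg_decomp[where P=P and n=n and pdeg=pdeg, OF posD P_inj P_rat] degD by (simp add: v_def E_def)
  note low = lowsum[OF jv] and up = upsum[OF jv]
  have tint: "int t = (\<Sum>i\<in>{1..n}. int (min (m+1) (v i)))" by (simp add: tv)
  have i1: "int m * int n - (\<Sum>l=1..m. int l * int (j l)) \<le> int t"
  proof -
    have "(\<Sum>i\<in>{1..n}. int (min m (v i))) \<le> (\<Sum>i\<in>{1..n}. int (min (m+1) (v i)))"
      by (intro sum_mono) simp
    then show ?thesis using low tint by linarith
  qed
  have i2: "int t \<le> (int m + 1) * int n - (\<Sum>l=1..m. (int l + 1) * int (j l))"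
  proof -
    have "(\<Sum>i\<in>{1..n}. int (min (m+1) (v i))) \<le> (\<Sum>i\<in>{1..n}. if v i < m then int (v i) else int m + 1)"
      by (intro sum_mono) (simp add: min_def)
    then show ?thesis using up tint by linarith
  qed
  have ii: "\<exists>D. pos_divisor D \<and> div_deg pdeg D = r - t \<and> supp D \<inter> P ` {1..n} = {}"
    if eq: "int m * int n = int t + (\<Sum>l=1..m. int l * int (j l))"
  proof -
    have "(\<Sum>i\<in>{1..n}. int (min (m+1) (v i)) - int (min m (v i))) = 0"
      using eq low tint by (simp add: sum_subtractf)
    then have z: "\<forall>i\<in>{1..n}. int (min (m+1) (v i)) - int (min m (v i)) = 0"
      by (subst (asm) sum_nonneg_eq_0_iff) auto
    have vle: "v i \<le> m" if "i \<in> {1..n}" for i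
    proof -
      have "min (m+1) (v i) = min m (v i)" using z that by auto
      then show "v i \<le> m" by (simp add: min_def split: if_splits)
    qed
    have "(\<Sum>i\<in>{1..n}. v i) = t" unfolding tv
    proof (intro sum.cong refl)
      fix i assume "i \<in> {1..n}"
      then have "v i \<le> m" by (rule vle)
      then show "v i = min (m+1) (v i)" by simp
    qed
    then have dE: "div_deg pdeg E = r - t" using rv by simp
    have "supp E \<subseteq> supp D" by (auto simp: supp_def E_def)
    then have "pos_divisor E" using posD by (auto simp: pos_divisor_def intro: finite_subset)
    moreover have "supp E \<inter> P ` {1..n} = {}" by (auto simp: supp_def E_def)
    ultimately show ?thesis using dE by blast
  qed
  show "((int m * int n - (\<Sum>l=1..m. int l * int (j l)) \<le> int t \<and>
      int t \<le> (int m + 1) * int n - (\<Sum>l=1..m. (int l + 1) * int (j l))) \<and>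
     ((int m * int n = int t + (\<Sum>l=1..m. int l * int (j l)) \<and> r > t) \<longrightarrow>
        (\<exists>D. pos_divisor D \<and> div_deg pdeg D = r - t \<and>
             supp D \<inter> P ` {1..n} = {})))"
    using i1 i2 ii by blast
next
  assume H: "((int m * int n - (\<Sum>l=1..m. int l * int (j l)) \<le> int t \<and>
      int t \<le> (int m + 1) * int n - (\<Sum>l=1..m. (int l + 1) * int (j l))) \<and>
     ((int m * int n = int t + (\<Sum>l=1..m. int l * int (j l)) \<and> r > t) \<longrightarrow>
        (\<exists>D. pos_divisor D \<and> div_deg pdeg D = r - t \<and>
             supp D \<inter> P ` {1..n} = {})))"
  define SL where "SL = (\<Sum>l=1..m. int l * int (j l))"
  define SJ where "SJ = (\<Sum>l=1..m. j l)"
  define Kint where "Kint = int t - int m * int n + SL"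
  have Kpos: "0 \<le> Kint" using H by (simp add: Kint_def SL_def)
  have Sj: "(\<Sum>l=1..m. (int l + 1) * int (j l)) = SL + int SJ"
    by (simp add: SL_def SJ_def algebra_simps sum.distrib)
  define K where "K = nat Kint"
  have KS: "SJ + K \<le> n"
  proof -
    have h2: "int t \<le> (int m + 1) * int n - (SL + int SJ)" using H unfolding SL_def[symmetric] Sj by blast
    have "(int m + 1) * int n = int m * int n + int n" by (simp add: distrib_right)
    then have "int SJ + Kint \<le> int n" using h2 unfolding Kint_def by linarith
    then have "int (SJ + K) \<le> int n" using Kpos by (simp add: K_def)
    then show ?thesis by linarith
  qed
  define s where "s = n - SJ - K"
  define e where "e = r - t"
  obtain E where Epos: "pos_divisor E" and Edisj: "supp E \<inter> P`{1..n} = {}"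
    and Edeg: "div_deg pdeg E + (if K = 0 then 0 else e) = r - t"
  proof (cases "K = 0 \<and> r > t")
    case True
    then have "int m * int n = int t + SL" using Kpos by (simp add: K_def Kint_def)
    then obtain D' where "pos_divisor D'" "div_deg pdeg D' = r - t" "supp D' \<inter> P ` {1..n} = {}"
      using H True by (auto simp: SL_def)
    then show ?thesis using that True by simp
  next
    case False
    have p0: "pos_divisor (\<lambda>_. 0)" and s0: "supp (\<lambda>_. 0::nat) = {}"
      by (auto simp: pos_divisor_def supp_def)
    have d0: "div_deg pdeg (\<lambda>_. 0) = 0" by (simp add: div_deg_def s0)
    show ?thesis
    proof (rule that[OF p0])
      show "supp (\<lambda>_. 0::nat) \<inter> P ` {1..n} = {}" by (simp add: s0)
      show "div_deg pdeg (\<lambda>_. 0) + (if K = 0 then 0 else e) = r - t"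
        using False rt by (auto simp: d0 e_def)
    qed
  qed
  define A where "A = concat (map (\<lambda>l. replicate (j l) (m - l)) [1..<Suc m])"
  define L where "L = A @ replicate s m @ (if K = 0 then [] else replicate (K-1) (m+1) @ [m+1+e])"
  note LC = list_constr[where j=j and m=m and s=s and K=K and e=e, folded A_def, folded L_def]
  have len: "length L = n" using LC(1) KS by (simp add: s_def SJ_def)
  define v where "v i = L!(i-1)" for i
  define D where "D Q = (if Q \<in> P`{1..n} then v (the_inv_into {1..n} P Q) else E Q)" for Q
  have DP: "\<And>i. i\<in>{1..n} \<Longrightarrow> D (P i) = v i" using P_inj by (simp add: D_def the_inv_into_f_f)
  have "supp D \<subseteq> P`{1..n} \<union> supp E" by (auto simp: supp_def D_def)
  then have posD: "pos_divisor D" using Epos by (auto simp: pos_divisor_def intro: finite_subset)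
  have Eeq: "(\<lambda>Q. if Q \<in> P`{1..n} then 0 else D Q) = E"
    using Edisj by (auto simp: D_def supp_def fun_eq_iff)
  have cnt: "\<And>l. l\<in>{1..m} \<Longrightarrow> j l = card {i\<in>{1..n}. v i = m - l}"
  proof -
    fix l assume l: "l \<in> {1..m}"
    have "card {i\<in>{1..n}. v i = m - l} = length (filter (\<lambda>x. x = m - l) L)"
      unfolding v_def by (rule shift_card[OF len])
    then show "j l = card {i\<in>{1..n}. v i = m - l}" using LC(2)[OF l] by simp
  qed
  have cntK: "card {i\<in>{1..n}. m < v i} = K"
    unfolding v_def using shift_card[OF len, of "\<lambda>x. m < x"] LC(3) by simp
  have sumext: "(\<Sum>i\<in>{1..n}. v i - min (m+1) (v i)) = (if K = 0 then 0 else e)"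
    using shift_sum[OF len, of "\<lambda>x. x - min (m+1) x"] LC(4) by (simp add: v_def)
  have "int (\<Sum>i\<in>{1..n}. min (m+1) (v i)) = (\<Sum>i\<in>{1..n}. int (min m (v i)) + (if m < v i then 1 else 0))"
    by (simp add: of_nat_sum) (intro sum.cong; auto)
  also have "\<dots> = (\<Sum>i\<in>{1..n}. int (min m (v i))) + int (card {i\<in>{1..n}. m < v i})"
    by (simp add: sum.distrib sum.If_cases Int_def conj_commute)
  also have "\<dots> = int t" using lowsum[OF cnt] cntK Kpos by (simp add: K_def Kint_def SL_def)
  finally have T: "(\<Sum>i\<in>{1..n}. min (m+1) (v i)) = t" by (simp only: of_nat_eq_iff)
  have "(\<Sum>i\<in>{1..n}. v i) = (\<Sum>i\<in>{1..n}. min (m+1) (v i) + (v i - min (m+1) (v i)))"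
    by (intro sum.cong) auto
  also have "\<dots> = t + (if K = 0 then 0 else e)" by (simp only: sum.distrib T sumext)
  finally have sv: "(\<Sum>i\<in>{1..n}. v i) = t + (if K = 0 then 0 else e)" .
  have degD: "div_deg pdeg D = r"
    using deg_decomp[where P=P and n=n and pdeg=pdeg, OF posD P_inj P_rat] Eeq sv Edeg rt DP by simp
  have dbar: "div_deg pdeg (Dbar m n P D) = t"
    using deg_Dbar[where P=P and n=n and pdeg=pdeg and m=m and D=D, OF P_inj P_rat] DP T by simp
  have jD: "\<forall>l\<in>{1..m}. jl m n P D l = j l"
  proof
    fix l assume l: "l \<in> {1..m}"
    have "{i\<in>{1..n}. D (P i) = m - l} = {i\<in>{1..n}. v i = m - l}" using DP by auto
    then show "jl m n P D l = j l" using cnt[OF l] by (simp add: jl_def)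
  qed
  have "D \<in> U pdeg m n P r t j" using posD degD dbar jD by (simp add: U_def)
  then show "U pdeg m n P r t j \<noteq> {}" by blast
qed

end
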